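(* Let $X_1, X_2, \ldots$ be independent random variables, each uniformly distributed on $[-1,1]$, and fix $\varepsilon > 0$. For $t \ge 0$ and $z \in \mathbb{R}$, let $f_t(z) = 1$ if there exists $S \subseteq \{1,\dots,t\}$ with $\lvert z - \sum_{i \in S} X_i \rvert < \varepsilon$, and $f_t(z) = 0$ otherwise; let $v_t = \frac{1}{2}\int_{-1}^{1} f_t(z)\,\mathrm{d}z$, let $\tau_1 = \min\{t \ge 0 : v_t > 1/2\}$, and for $t \ge 0$ let $w_t = 1 - v_{\tau_1 + t}$. Then for all $t \ge 0$, $$\mathbb{E}\left[w_{t+1} \,\middle|\, X_1,\dots,X_{\tau_1+t}\right] \le w_t\left[1 - \tfrac{1}{4}(1 - w_t)\right].$$
   Context: $f_t$ is the indicator that $z$ can be approximated to within error strictly less than $\varepsilon$ by a subset sum of the first $t$ variables (the empty sum being $0$); $v_t$ is the fraction of $[-1,1]$ so approximated; $\tau_1$ is the first time this fraction exceeds $1/2$ (it is a stopping time, taken to be finite); $w_t$ is the fraction of $[-1,1]$ not approximated, $t$ steps after time $\tau_1$. *)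

theory Defs
  imports "HOL-Probability.Probability"
begin

text \<open>The random variables are X 1, X 2, ... (the value X 0 is ignored).
  Subset sums range over finite S of indices i with 1 \<le> i and i \<le> k,
  where k is an extended natural (k = \<infinity> is only used on the null event
  where tau1 would be infinite).\<close>

definition fapp :: "(nat \<Rightarrow> 'a \<Rightarrow> real) \<Rightarrow> real \<Rightarrow> enat \<Rightarrow> 'a \<Rightarrow> real \<Rightarrow> real" where
  "fapp X \<epsilon> k \<omega> z =
     (if \<exists>S. finite S \<and> S \<subseteq> {i. 1 \<le> i \<and> enat i \<le> k} \<and> \<bar>z - (\<Sum>i\<in>S. X i \<omega>)\<bar> < \<epsilon>
      then 1 else 0)"

definition vfrac :: "(nat \<Rightarrow> 'a \<Rightarrow> real) \<Rightarrow> real \<Rightarrow> enat \<Rightarrow> 'a \<Rightarrow> real" where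
  "vfrac X \<epsilon> k \<omega> = (1/2) * (LINT z:{-1..1}|lborel. fapp X \<epsilon> k \<omega> z)"

definition tau1 :: "(nat \<Rightarrow> 'a \<Rightarrow> real) \<Rightarrow> real \<Rightarrow> 'a \<Rightarrow> enat" where
  "tau1 X \<epsilon> \<omega> =
     (if \<exists>t. vfrac X \<epsilon> (enat t) \<omega> > 1/2
      then enat (LEAST t. vfrac X \<epsilon> (enat t) \<omega> > 1/2) else \<infinity>)"

definition wfrac :: "(nat \<Rightarrow> 'a \<Rightarrow> real) \<Rightarrow> real \<Rightarrow> nat \<Rightarrow> 'a \<Rightarrow> real" where
  "wfrac X \<epsilon> t \<omega> = 1 - vfrac X \<epsilon> (tau1 X \<epsilon> \<omega> + enat t) \<omega>"

definition natfilt :: "'a measure \<Rightarrow> (nat \<Rightarrow> 'a \<Rightarrow> real) \<Rightarrow> enat \<Rightarrow> 'a measure" where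
  "natfilt M X k = sigma (space M)
     {X i -` B \<inter> space M | i B. 1 \<le> i \<and> enat i \<le> k \<and> B \<in> sets borel}"

end

theory Submission
  imports Defs
begin

definition Xk :: "(nat \<Rightarrow> 'a \<Rightarrow> real) \<Rightarrow> enat \<Rightarrow> nat \<Rightarrow> 'a \<Rightarrow> real" where
  "Xk X k i \<omega> = (if 1 \<le> i \<and> enat i \<le> k then X i \<omega> else 0)"

definition SS :: "enat \<Rightarrow> nat set set" where
  "SS k = {S. finite S \<and> S \<subseteq> {i. 1 \<le> i \<and> enat i \<le> k}}"

lemma countable_SS: "countable (SS k)"
  by (rule countable_subset[OF _ countable_Collect_finite]) (auto simp: SS_def)

lemma fapp_alt: "fapp X \<epsilon> k \<omega> z =
  (if \<exists>S\<in>SS k. \<bar>z - (\<Sum>i\<in>S. Xk X k i \<omega>)\<bar> < \<epsilon> then 1 else 0)"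
proof -
  have "\<And>S. S \<in> SS k \<Longrightarrow> (\<Sum>i\<in>S. Xk X k i \<omega>) = (\<Sum>i\<in>S. X i \<omega>)"
    by (rule sum.cong) (auto simp: SS_def Xk_def)
  then show ?thesis unfolding fapp_def by (auto simp: SS_def)
qed

lemma natfilt_space[simp]: "space (natfilt M X k) = space M"
  unfolding natfilt_def by (rule space_measure_of) auto

lemma sets_natfilt: "sets (natfilt M X k) = sigma_sets (space M)
     {X i -` B \<inter> space M | i B. 1 \<le> i \<and> enat i \<le> k \<and> B \<in> sets borel}"
  unfolding natfilt_def by (rule sets_measure_of) auto

lemma natfilt_mono: "k \<le> l \<Longrightarrow> sets (natfilt M X k) \<subseteq> sets (natfilt M X l)"
  unfolding sets_natfilt by (rule sigma_sets_mono') (use order_trans in fastforce)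

lemma natfilt_sub:
  assumes "\<And>i. 1 \<le> i \<Longrightarrow> X i \<in> borel_measurable M"
  shows "sets (natfilt M X k) \<subseteq> sets M"
  unfolding sets_natfilt
  by (rule sets.sigma_sets_subset) (use assms in \<open>auto intro: measurable_sets\<close>)

lemma natfilt_meas:
  assumes "1 \<le> i" "enat i \<le> k"
  shows "X i \<in> borel_measurable (natfilt M X k)"
proof (rule borel_measurableI)
  fix S :: "real set" assume "open S"
  then have "X i -` S \<inter> space M \<in> {X i -` B \<inter> space M | i B. 1 \<le> i \<and> enat i \<le> k \<and> B \<in> sets borel}"
    using assms \<open>open S\<close> by (blast intro: borel_open)
  then show "X i -` S \<inter> space (natfilt M X k) \<in> sets (natfilt M X k)"
    unfolding sets_natfilt by auto
qed

lemma Xk_meas[measurable]: "Xk X k i \<in> borel_measurable (natfilt M X k)"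
  unfolding Xk_def using natfilt_meas[where i=i and k=k and M=M and X=X] by (cases "1 \<le> i \<and> enat i \<le> k") auto

lemma fapp_meas2[measurable]:
  "(\<lambda>p. fapp X \<epsilon> k (fst p) (snd p)) \<in> borel_measurable (natfilt M X k \<Otimes>\<^sub>M borel)"
  unfolding fapp_alt
  using countable_SS[of k] by measurable

lemma fapp_meas1[measurable]:
  "(\<lambda>z. fapp X \<epsilon> k \<omega> z) \<in> borel_measurable borel"
  unfolding fapp_alt
  using countable_SS[of k] by measurable

lemma fapp_01: "fapp X \<epsilon> k \<omega> z = 0 \<or> fapp X \<epsilon> k \<omega> z = 1"
  unfolding fapp_def by auto

lemma fapp_ge0[simp]: "0 \<le> fapp X \<epsilon> k \<omega> z" and fapp_le1[simp]: "fapp X \<epsilon> k \<omega> z \<le> 1"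
  unfolding fapp_def by auto

lemma fapp_near0: "\<bar>z\<bar> < \<epsilon> \<Longrightarrow> fapp X \<epsilon> k \<omega> z = 1"
  unfolding fapp_def by (rule if_P, rule exI[of _ "{}"]) auto

lemma fapp_mono: assumes "k \<le> l" shows "fapp X \<epsilon> k \<omega> z \<le> fapp X \<epsilon> l \<omega> z"
proof -
  have "{i. 1 \<le> i \<and> enat i \<le> k} \<subseteq> {i. 1 \<le> i \<and> enat i \<le> l}" using assms by (auto dest: order_trans)
  then show ?thesis unfolding fapp_def by (smt (verit) subset_trans)
qed

lemma fapp_Suc:
  "1 - fapp X \<epsilon> (enat (Suc k)) \<omega> z =
     (1 - fapp X \<epsilon> (enat k) \<omega> z) * (1 - fapp X \<epsilon> (enat k) \<omega> (z - X (Suc k) \<omega>))"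
proof -
  define K where "K = {i. 1 \<le> i \<and> enat i \<le> enat k}"
  define K1 where "K1 = {i. 1 \<le> i \<and> enat i \<le> enat (Suc k)}"
  have K1: "K1 = insert (Suc k) K" unfolding K1_def K_def by auto
  have nK: "Suc k \<notin> K" unfolding K_def by auto
  have "(\<exists>S. finite S \<and> S \<subseteq> K1 \<and> \<bar>z - (\<Sum>i\<in>S. X i \<omega>)\<bar> < \<epsilon>)
    \<longleftrightarrow> (\<exists>S. finite S \<and> S \<subseteq> K \<and> \<bar>z - (\<Sum>i\<in>S. X i \<omega>)\<bar> < \<epsilon>)
       \<or> (\<exists>S. finite S \<and> S \<subseteq> K \<and> \<bar>z - X (Suc k) \<omega> - (\<Sum>i\<in>S. X i \<omega>)\<bar> < \<epsilon>)"
    (is "?L \<longleftrightarrow> ?A \<or> ?B")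
  proof
    assume ?L
    then obtain S where S: "finite S" "S \<subseteq> K1" "\<bar>z - (\<Sum>i\<in>S. X i \<omega>)\<bar> < \<epsilon>" by blast
    show "?A \<or> ?B"
    proof (cases "Suc k \<in> S")
      case True
      have sub: "S - {Suc k} \<subseteq> K" using S(2) K1 by blast
      have fin: "finite (S - {Suc k})" using S(1) by blast
      have "(\<Sum>i\<in>S. X i \<omega>) = X (Suc k) \<omega> + (\<Sum>i\<in>S - {Suc k}. X i \<omega>)"
        using S(1) True by (rule sum.remove)
      then have "\<bar>z - X (Suc k) \<omega> - (\<Sum>i\<in>S - {Suc k}. X i \<omega>)\<bar> < \<epsilon>" using S(3) by (simp only: diff_diff_eq)
      then have ?B using sub fin by blast
      then show ?thesis by (rule disjI2)
    next
      case False
      then have "S \<subseteq> K" using S(2) K1 by blast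
      then have ?A using S by blast
      then show ?thesis by (rule disjI1)
    qed
  next
    assume "?A \<or> ?B"
    then show ?L
    proof
      assume ?A
      then obtain S where S: "finite S" "S \<subseteq> K" "\<bar>z - (\<Sum>i\<in>S. X i \<omega>)\<bar> < \<epsilon>" by blast
      then have "S \<subseteq> K1" using K1 by blast
      then show ?L using S by blast
    next
      assume ?B
      then obtain S where S: "finite S" "S \<subseteq> K"
        "\<bar>z - X (Suc k) \<omega> - (\<Sum>i\<in>S. X i \<omega>)\<bar> < \<epsilon>" by blast
      have nin: "Suc k \<notin> S" using S(2) nK by blast
      have "(\<Sum>i\<in>insert (Suc k) S. X i \<omega>) = X (Suc k) \<omega> + (\<Sum>i\<in>S. X i \<omega>)"
        using S(1) nin by (rule sum.insert)
      then have "\<bar>z - (\<Sum>i\<in>insert (Suc k) S. X i \<omega>)\<bar> < \<epsilon>" using S(3) by (simp only: diff_diff_eq)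
      moreover have "insert (Suc k) S \<subseteq> K1" using S(2) K1 by blast
      moreover have "finite (insert (Suc k) S)" using S(1) by blast
      ultimately show ?L by blast
    qed
  qed
  note iff = this
  have e1: "fapp X \<epsilon> (enat (Suc k)) \<omega> z = (if ?L then 1 else 0)" unfolding fapp_def K1_def by (rule refl)
  have e2: "fapp X \<epsilon> (enat k) \<omega> z = (if ?A then 1 else 0)" unfolding fapp_def K_def by (rule refl)
  have e3: "fapp X \<epsilon> (enat k) \<omega> (z - X (Suc k) \<omega>) = (if ?B then 1 else 0)" unfolding fapp_def K_def by (rule refl)
  have gen: "\<And>L A B. L = (A \<or> B) \<Longrightarrow> 1 - (if L then 1 else 0) = (1 - (if A then 1 else (0::real))) * (1 - (if B then 1 else 0))"
    by auto
  show ?thesis by (subst e1, subst e2, subst e3) (rule gen[OF iff])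
qed

definition NI :: "(real \<Rightarrow> real) \<Rightarrow> ennreal" where
  "NI h = (\<integral>\<^sup>+z. indicator {-1..1} z * ennreal (h z) \<partial>lborel)"

lemma NI_le:
  fixes h :: "real \<Rightarrow> real"
  assumes "\<And>z. z \<in> {-1..1} \<Longrightarrow> h z \<le> 1"
  shows "NI h \<le> 2"
proof -
  have "NI h \<le> (\<integral>\<^sup>+z. indicator {-1..1} (z::real) \<partial>lborel)"
    unfolding NI_def by (rule nn_integral_mono) (use assms in \<open>auto simp: indicator_def\<close>)
  also have "\<dots> = 2" by simp
  finally show ?thesis .
qed

lemma NI_fin: fixes h :: "real \<Rightarrow> real" shows "(\<And>z. z \<in> {-1..1} \<Longrightarrow> h z \<le> 1) \<Longrightarrow> NI h < \<top>"
  using NI_le[of h] by (metis ennreal_numeral ennreal_less_top le_less_trans)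

lemma lint_NI:
  fixes h :: "real \<Rightarrow> real"
  assumes [measurable]: "h \<in> borel_measurable borel" and "\<And>z. 0 \<le> h z" "\<And>z. h z \<le> 1"
  shows "ennreal (LINT z:{-1..1}|lborel. h z) = NI h"
proof -
  have "(LINT z:{-1..1}|lborel. h z) = enn2real (\<integral>\<^sup>+z. ennreal (indicator {-1..1} z *\<^sub>R h z) \<partial>lborel)"
    unfolding set_lebesgue_integral_def
    by (rule integral_eq_nn_integral) (use assms in auto)
  also have "(\<integral>\<^sup>+z. ennreal (indicator {-1..1} z *\<^sub>R h z) \<partial>lborel) = NI h"
    unfolding NI_def by (intro nn_integral_cong) (auto simp: indicator_def)
  finally show ?thesis using NI_fin[of h] assms by simp
qed

lemma lint_ge0:
  fixes h :: "real \<Rightarrow> real"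
  assumes [measurable]: "h \<in> borel_measurable borel" and "\<And>z. 0 \<le> h z" "\<And>z. h z \<le> 1"
  shows "0 \<le> (LINT z:{-1..1}|lborel. h z)"
  unfolding set_lebesgue_integral_def by (rule Bochner_Integration.integral_nonneg) (use assms in \<open>auto simp: indicator_def\<close>)

lemma lint_le2:
  fixes h :: "real \<Rightarrow> real"
  assumes [measurable]: "h \<in> borel_measurable borel" and "\<And>z. 0 \<le> h z" "\<And>z. h z \<le> 1"
  shows "(LINT z:{-1..1}|lborel. h z) \<le> 2"
proof -
  have "ennreal (LINT z:{-1..1}|lborel. h z) \<le> 2" using lint_NI[OF assms] NI_le[of h] assms by simp
  then have "ennreal (LINT z:{-1..1}|lborel. h z) \<le> ennreal 2" by simp
  then show ?thesis by (simp add: ennreal_le_iff2 del: ennreal_numeral)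
qed

lemma lint_compl:
  fixes h :: "real \<Rightarrow> real"
  assumes [measurable]: "h \<in> borel_measurable borel" and "\<And>z. 0 \<le> h z" "\<And>z. h z \<le> 1"
  shows "(LINT z:{-1..1}|lborel. 1 - h z) = 2 - (LINT z:{-1..1}|lborel. h z)"
proof -
  have m2: "(\<lambda>z. 1 - h z) \<in> borel_measurable borel" by measurable
  have "NI (\<lambda>z. 1 - h z) + NI h = (\<integral>\<^sup>+z. indicator {-1..1} z * ennreal (1 - h z) + indicator {-1..1} z * ennreal (h z) \<partial>lborel)"
    unfolding NI_def by (rule nn_integral_add[symmetric]) auto
  also have "\<dots> = (\<integral>\<^sup>+z. indicator {-1..1} (z::real) \<partial>lborel)"
    by (rule nn_integral_cong) (auto simp: indicator_def ennreal_plus[symmetric] assms simp del: ennreal_plus)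
  also have "\<dots> = ennreal 2" by simp
  finally have "ennreal (LINT z:{-1..1}|lborel. 1 - h z) + ennreal (LINT z:{-1..1}|lborel. h z) = ennreal 2"
    using lint_NI[OF assms] lint_NI[OF m2] assms by simp
  then have "ennreal ((LINT z:{-1..1}|lborel. 1 - h z) + (LINT z:{-1..1}|lborel. h z)) = ennreal 2"
    using lint_ge0[OF assms] lint_ge0[OF m2] assms by (subst ennreal_plus) auto
  then have "(LINT z:{-1..1}|lborel. 1 - h z) + (LINT z:{-1..1}|lborel. h z) = 2"
    using lint_ge0[OF assms] lint_ge0[OF m2] assms by (subst (asm) ennreal_inj) auto
  then show ?thesis by simp
qed

locale gfun =
  fixes g :: "real \<Rightarrow> real" and \<epsilon> :: real
  assumes g_meas[measurable]: "g \<in> borel_measurable borel"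
    and g_ge0: "\<And>y. 0 \<le> g y" and g_le1: "\<And>y. g y \<le> 1"
    and g_near0: "\<And>y. \<bar>y\<bar> < \<epsilon> \<Longrightarrow> g y = 0"
    and eps_pos: "0 < \<epsilon>"
begin

definition N :: "real \<Rightarrow> ennreal" where
  "N z = (\<integral>\<^sup>+x. indicator {-1..1} x * ennreal (g (z - x)) \<partial>lborel)"

lemma N_subst: "N z = (\<integral>\<^sup>+y. indicator {-1..1} (z - y) * ennreal (g y) \<partial>lborel)"
proof -
  have m: "(\<lambda>x. indicator {-1..1} x * ennreal (g (z - x))) \<in> borel_measurable borel" by measurable
  show ?thesis unfolding N_def using nn_integral_real_affine[OF m, of "-1" z] by simp
qed

lemma N_le1:
  assumes z: "z \<in> {-1..1}"
  shows "N z \<le> NI g + ennreal \<bar>z\<bar>"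
proof -
  define D where "D = {z-1..z+1} - {-1..1::real}"
  have D[measurable]: "D \<in> sets borel" unfolding D_def by auto
  have "N z \<le> (\<integral>\<^sup>+y. indicator {-1..1} y * ennreal (g y) + indicator D y \<partial>lborel)"
    unfolding N_subst
  proof (rule nn_integral_mono)
    fix y :: real
    show "indicator {-1..1} (z - y) * ennreal (g y) \<le> indicator {-1..1} y * ennreal (g y) + indicator D y"
      using g_le1[of y] by (auto simp: indicator_def D_def)
  qed
  also have "\<dots> = NI g + emeasure lborel D"
    unfolding NI_def by (subst nn_integral_add) auto
  also have "emeasure lborel D \<le> ennreal \<bar>z\<bar>"
  proof (cases "0 \<le> z")
    case True
    have "emeasure lborel D \<le> emeasure lborel {1<..z+1}"
      by (rule emeasure_mono) (use True in \<open>auto simp: D_def\<close>)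
    also have "\<dots> = ennreal \<bar>z\<bar>" using True by simp
    finally show ?thesis .
  next
    case False
    have "emeasure lborel D \<le> emeasure lborel {z-1..<-1}"
      by (rule emeasure_mono) (use False in \<open>auto simp: D_def\<close>)
    also have "\<dots> = ennreal \<bar>z\<bar>" using False by simp
    finally show ?thesis .
  qed
  finally show ?thesis by (simp add: add_left_mono)
qed

lemma N_le2:
  assumes z: "z \<in> {-1..1}"
  shows "N z \<le> ennreal (2 - min \<epsilon> 1)"
proof -
  define e where "e = min \<epsilon> 1"
  have e: "0 < e" "e \<le> 1" "e \<le> \<epsilon>" using eps_pos by (auto simp: e_def)
  define E where "E = {z-1..z+1} - {-e<..<e}"
  have E[measurable]: "E \<in> sets borel" unfolding E_def by auto
  have "N z \<le> (\<integral>\<^sup>+y. indicator E y \<partial>lborel)"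
    unfolding N_subst
  proof (rule nn_integral_mono)
    fix y :: real
    show "indicator {-1..1} (z - y) * ennreal (g y) \<le> indicator E y"
      using g_le1[of y] g_near0[of y] e by (auto simp: indicator_def E_def)
  qed
  also have "\<dots> = emeasure lborel E" using E by simp
  also have "emeasure lborel E \<le> ennreal (2 - e)"
  proof (cases "0 \<le> z")
    case True
    have "emeasure lborel E \<le> emeasure lborel ({z-1..z+1} - {0..<e})"
      by (rule emeasure_mono) (auto simp: E_def)
    also have "\<dots> = emeasure lborel {z-1..z+1} - emeasure lborel {0..<e}"
      using True z e by (intro emeasure_Diff) auto
    also have "\<dots> = ennreal (2 - e)" using e ennreal_minus[of e 2] by simp
    finally show ?thesis .
  next
    case False
    have "emeasure lborel E \<le> emeasure lborel ({z-1..z+1} - {-e<..0})"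
      by (rule emeasure_mono) (auto simp: E_def)
    also have "\<dots> = emeasure lborel {z-1..z+1} - emeasure lborel {-e<..0}"
      using False z e by (intro emeasure_Diff) auto
    also have "\<dots> = ennreal (2 - e)" using e ennreal_minus[of e 2] by simp
    finally show ?thesis .
  qed
  finally show ?thesis by (simp add: e_def)
qed

end

lemma tri_integral:
  "(\<integral>\<^sup>+z. indicator {-1..1} z * ennreal (max (\<bar>z\<bar> - 1/2) 0) \<partial>lborel) = ennreal (1/4)"
proof -
  have "(\<integral>\<^sup>+z. indicator {-1..1} z * ennreal (max (\<bar>z\<bar> - 1/2) 0) \<partial>lborel)
     = (\<integral>\<^sup>+z. ennreal (z - 1/2) * indicator {1/2..1} z + ennreal (- z - 1/2) * indicator {-1..-1/2} z \<partial>lborel)"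
    by (rule nn_integral_cong) (auto simp: indicator_def max_def abs_if)
  also have "\<dots> = (\<integral>\<^sup>+z. ennreal (z - 1/2) * indicator {1/2..1} z \<partial>lborel)
      + (\<integral>\<^sup>+z. ennreal (- z - 1/2) * indicator {-1..-1/2} z \<partial>lborel)"
    by (rule nn_integral_add) auto
  also have "(\<integral>\<^sup>+z. ennreal (z - 1/2) * indicator {1/2..1} z \<partial>lborel) = ennreal ((1^2/2 - 1/2) - ((1/2)^2/2 - (1/2)/2))"
    by (rule nn_integral_FTC_Icc[where F="\<lambda>z. z^2/2 - z/2"]) (auto intro!: derivative_eq_intros)
  also have "\<dots> = ennreal (1/8)" by (simp add: power2_eq_square)
  also have "(\<integral>\<^sup>+z. ennreal (- z - 1/2) * indicator {-1..-1/2} z \<partial>lborel) = ennreal ((-((-1/2)^2/2) - (-1/2)/2) - (-((-1)^2/2) - (-1)/2))"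
    by (rule nn_integral_FTC_Icc[where F="\<lambda>z. -(z^2/2) - z/2"]) (auto intro!: derivative_eq_intros)
  also have "\<dots> = ennreal (1/8)" by (simp add: power2_eq_square)
  also have "ennreal (1/8) + ennreal (1/8) = ennreal (1/4)"
    by (subst ennreal_plus[symmetric]) auto
  finally show ?thesis .
qed

context gfun
begin

definition RR :: "real \<Rightarrow> ennreal" where
  "RR x = NI (\<lambda>z. g z * g (z - x))"

definition QQ :: ennreal where
  "QQ = (\<integral>\<^sup>+x. indicator {-1..1} x * RR x \<partial>lborel)"

lemma QQ_eq: "QQ = (\<integral>\<^sup>+z. indicator {-1..1} z * ennreal (g z) * N z \<partial>lborel)"
proof -
  define F where "F z x = indicator {-1..1} x * (indicator {-1..1} z * ennreal (g z * g (z - x)))" for z x :: real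
  have Fm: "case_prod F \<in> borel_measurable (lborel \<Otimes>\<^sub>M lborel)"
    unfolding F_def by measurable
  have "QQ = (\<integral>\<^sup>+x. \<integral>\<^sup>+z. F z x \<partial>lborel \<partial>lborel)"
    unfolding QQ_def RR_def NI_def F_def
    by (rule nn_integral_cong, rule nn_integral_cmult[symmetric]) measurable
  also have "\<dots> = (\<integral>\<^sup>+z. \<integral>\<^sup>+x. F z x \<partial>lborel \<partial>lborel)"
    by (rule lborel_pair.Fubini'[OF Fm])
  also have "\<dots> = (\<integral>\<^sup>+z. indicator {-1..1} z * ennreal (g z) * N z \<partial>lborel)"
  proof (rule nn_integral_cong)
    fix z :: real
    have "(\<integral>\<^sup>+x. F z x \<partial>lborel) = (\<integral>\<^sup>+x. (indicator {-1..1} z * ennreal (g z)) * (indicator {-1..1} x * ennreal (g (z - x))) \<partial>lborel)"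
      unfolding F_def by (rule nn_integral_cong) (simp add: ennreal_mult g_ge0 mult_ac)
    also have "\<dots> = indicator {-1..1} z * ennreal (g z) * N z"
      unfolding N_def by (rule nn_integral_cmult) measurable
    finally show "(\<integral>\<^sup>+x. F z x \<partial>lborel) = indicator {-1..1} z * ennreal (g z) * N z" .
  qed
  finally show ?thesis .
qed

lemma NIg: "NI g = ennreal (enn2real (NI g))"
  using NI_fin[of g] g_le1 by (simp add: less_top)

lemma QQ_bound1: "QQ \<le> ennreal (enn2real (NI g) * (2 - min \<epsilon> 1))"
proof -
  have "QQ \<le> (\<integral>\<^sup>+z. indicator {-1..1} z * ennreal (g z) * ennreal (2 - min \<epsilon> 1) \<partial>lborel)"
    unfolding QQ_eq
    by (rule nn_integral_mono) (auto simp: indicator_def intro!: mult_left_mono N_le2)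
  also have "\<dots> = NI g * ennreal (2 - min \<epsilon> 1)"
    unfolding NI_def by (rule nn_integral_multc) measurable
  also have "\<dots> = ennreal (enn2real (NI g) * (2 - min \<epsilon> 1))"
    by (subst NIg) (simp add: ennreal_mult enn2real_nonneg)
  finally show ?thesis .
qed

lemma B_bound:
  "(\<integral>\<^sup>+z. indicator {-1..1} z * ennreal (g z * \<bar>z\<bar>) \<partial>lborel) \<le> NI g"
  "(\<integral>\<^sup>+z. indicator {-1..1} z * ennreal (g z * \<bar>z\<bar>) \<partial>lborel) \<le> ennreal (1/2) * NI g + ennreal (1/4)"
proof -
  show "(\<integral>\<^sup>+z. indicator {-1..1} z * ennreal (g z * \<bar>z\<bar>) \<partial>lborel) \<le> NI g"
    unfolding NI_def
  proof (rule nn_integral_mono)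
    fix z :: real
    have "g z * \<bar>z\<bar> \<le> g z" if "z \<in> {-1..1}"
      using that g_ge0[of z] by (auto intro!: mult_left_le)
    then show "indicator {-1..1} z * ennreal (g z * \<bar>z\<bar>) \<le> indicator {-1..1} z * ennreal (g z)"
      by (auto simp: indicator_def intro!: ennreal_leI)
  qed
  have "(\<integral>\<^sup>+z. indicator {-1..1} z * ennreal (g z * \<bar>z\<bar>) \<partial>lborel)
     \<le> (\<integral>\<^sup>+z. ennreal (1/2) * (indicator {-1..1} z * ennreal (g z)) + indicator {-1..1} z * ennreal (max (\<bar>z\<bar> - 1/2) 0) \<partial>lborel)"
  proof (rule nn_integral_mono)
    fix z :: real
    have "g z * \<bar>z\<bar> \<le> 1/2 * g z + max (\<bar>z\<bar> - 1/2) 0"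
    proof (cases "\<bar>z\<bar> \<le> 1/2")
      case True
      have "g z * \<bar>z\<bar> \<le> g z * (1/2)" using True g_ge0[of z] by (intro mult_left_mono) auto
      then show ?thesis by (auto simp: max_def)
    next
      case False
      have "g z * (\<bar>z\<bar> - 1/2) \<le> 1 * (\<bar>z\<bar> - 1/2)"
        using False g_le1[of z] by (intro mult_right_mono) auto
      then show ?thesis using False by (auto simp: algebra_simps max_def)
    qed
    then have "ennreal (g z * \<bar>z\<bar>) \<le> ennreal (1/2 * g z + max (\<bar>z\<bar> - 1/2) 0)"
      by (rule ennreal_leI)
    also have "\<dots> = ennreal (1/2 * g z) + ennreal (max (\<bar>z\<bar> - 1/2) 0)"
      by (rule ennreal_plus) (auto simp: g_ge0)
    also have "ennreal (1/2 * g z) = ennreal (1/2) * ennreal (g z)"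
      by (rule ennreal_mult) (auto simp: g_ge0)
    finally have "ennreal (g z * \<bar>z\<bar>) \<le> ennreal (1/2) * ennreal (g z) + ennreal (max (\<bar>z\<bar> - 1/2) 0)" .
    then show "indicator {-1..1} z * ennreal (g z * \<bar>z\<bar>) \<le> ennreal (1/2) * (indicator {-1..1} z * ennreal (g z)) + indicator {-1..1} z * ennreal (max (\<bar>z\<bar> - 1/2) 0)"
      by (auto simp: indicator_def)
  qed
  also have "\<dots> = (\<integral>\<^sup>+z. ennreal (1/2) * (indicator {-1..1} z * ennreal (g z)) \<partial>lborel) + (\<integral>\<^sup>+z. indicator {-1..1} z * ennreal (max (\<bar>z\<bar> - 1/2) 0) \<partial>lborel)"
    by (rule nn_integral_add) auto
  also have "\<dots> = ennreal (1/2) * NI g + ennreal (1/4)"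
    unfolding NI_def tri_integral by (subst nn_integral_cmult) auto
  finally show "(\<integral>\<^sup>+z. indicator {-1..1} z * ennreal (g z * \<bar>z\<bar>) \<partial>lborel) \<le> ennreal (1/2) * NI g + ennreal (1/4)" .
qed

lemma QQ_bound2:
  assumes c1: "enn2real (NI g) \<le> 1"
  shows "QQ \<le> ennreal (3/2 * enn2real (NI g) + (enn2real (NI g))^2 / 4)"
proof -
  define c where "c = enn2real (NI g)"
  have c0: "0 \<le> c" unfolding c_def by (simp add: enn2real_nonneg)
  have Nc: "NI g = ennreal c" unfolding c_def by (rule NIg)
  define B where "B = (\<integral>\<^sup>+z. indicator {-1..1} z * ennreal (g z * \<bar>z\<bar>) \<partial>lborel)"
  have "QQ \<le> (\<integral>\<^sup>+z. indicator {-1..1} z * ennreal (g z) * (NI g + ennreal \<bar>z\<bar>) \<partial>lborel)"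
    unfolding QQ_eq
    by (rule nn_integral_mono) (auto simp: indicator_def intro!: mult_left_mono N_le1)
  also have "\<dots> = (\<integral>\<^sup>+z. indicator {-1..1} z * ennreal (g z) * NI g + indicator {-1..1} z * ennreal (g z * \<bar>z\<bar>) \<partial>lborel)"
    by (rule nn_integral_cong) (simp add: ennreal_mult g_ge0 algebra_simps)
  also have "\<dots> = NI g * NI g + B"
    unfolding B_def by (subst nn_integral_add) (auto simp: NI_def nn_integral_multc)
  finally have Q: "QQ \<le> ennreal c * ennreal c + B" unfolding Nc .
  show ?thesis
  proof (cases "c \<le> 2/3")
    case True
    have "QQ \<le> ennreal c * ennreal c + ennreal c"
      using Q B_bound(1) unfolding B_def[symmetric] Nc by (meson add_left_mono order_trans)
    also have "\<dots> = ennreal (c * c + c)" using c0 by (simp add: ennreal_mult ennreal_plus)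
    also have "\<dots> \<le> ennreal (3/2 * c + c^2 / 4)"
    proof (rule ennreal_leI)
      have "c * c \<le> 2/3 * c" using True c0 by (intro mult_right_mono) auto
      then show "c * c + c \<le> 3/2 * c + c^2 / 4" by (simp add: power2_eq_square)
    qed
    finally show ?thesis unfolding c_def .
  next
    case False
    have "QQ \<le> ennreal c * ennreal c + (ennreal (1/2) * ennreal c + ennreal (1/4))"
      using Q B_bound(2) unfolding B_def[symmetric] Nc by (meson add_left_mono order_trans)
    also have "\<dots> = ennreal (c * c + (1/2 * c + 1/4))"
    proof -
      have h: "0 \<le> (1/2::real)" "0 \<le> (1/4::real)" "0 \<le> c*c" "0 \<le> 1/2*c" "0 \<le> 1/2*c + 1/4"
        using c0 by auto
      show ?thesis by (simp only: ennreal_plus[symmetric] ennreal_mult[symmetric] h c0)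
    qed
    also have "\<dots> \<le> ennreal (3/2 * c + c^2 / 4)"
    proof (rule ennreal_leI)
      have "0 \<le> (3*c - 1) * (1 - c)" using False c1 c_def by (intro mult_nonneg_nonneg) auto
      then show "c * c + (1/2 * c + 1/4) \<le> 3/2 * c + c^2 / 4" by (simp add: power2_eq_square algebra_simps)
    qed
    finally show ?thesis unfolding c_def .
  qed
qed

end

lemma gfun_QQ_bound1:
  assumes "gfun g \<epsilon>"
  shows "(\<integral>\<^sup>+x. indicator {-1..1} x * NI (\<lambda>z. g z * g (z - x)) \<partial>lborel) \<le> ennreal (enn2real (NI g) * (2 - min \<epsilon> 1))"
  using gfun.QQ_bound1[OF assms] unfolding gfun.QQ_def[OF assms] gfun.RR_def[OF assms] .

lemma gfun_QQ_bound2: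
  assumes "gfun g \<epsilon>" "enn2real (NI g) \<le> 1"
  shows "(\<integral>\<^sup>+x. indicator {-1..1} x * NI (\<lambda>z. g z * g (z - x)) \<partial>lborel) \<le> ennreal (3/2 * enn2real (NI g) + (enn2real (NI g))^2 / 4)"
  using gfun.QQ_bound2[OF assms] unfolding gfun.QQ_def[OF assms(1)] gfun.RR_def[OF assms(1)] .

lemma fapp_meas_raw1[measurable (raw)]:
  "b \<in> N \<rightarrow>\<^sub>M borel \<Longrightarrow> (\<lambda>p. fapp X \<epsilon> k \<omega> (b p)) \<in> borel_measurable N"
  by (rule measurable_compose[OF _ fapp_meas1])

locale setting =
  fixes M :: "'a measure" and X :: "nat \<Rightarrow> 'a \<Rightarrow> real" and \<epsilon> :: real
  assumes prob: "prob_space M"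
    and Xmeas: "\<And>i. 1 \<le> i \<Longrightarrow> X i \<in> borel_measurable M"
    and indep: "prob_space.indep_vars M (\<lambda>_. borel) X {1..}"
    and Xdistr: "\<And>i. 1 \<le> i \<Longrightarrow> distr M lborel (X i) = uniform_measure lborel {-1..1}"
    and eps: "\<epsilon> > 0"
begin

sublocale prob_space M by (rule prob)

lemma fapp_meas_raw2[measurable (raw)]:
  assumes "a \<in> N \<rightarrow>\<^sub>M natfilt M X k" "b \<in> N \<rightarrow>\<^sub>M borel"
  shows "(\<lambda>p. fapp X \<epsilon> k (a p) (b p)) \<in> borel_measurable N"
proof -
  have "(\<lambda>p. (a p, b p)) \<in> N \<rightarrow>\<^sub>M natfilt M X k \<Otimes>\<^sub>M borel" using assms by (rule measurable_Pair)
  from measurable_compose[OF this fapp_meas2] show ?thesis by simp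
qed

lemma natfilt_sub_M: "sets (natfilt M X k) \<subseteq> sets M"
  by (rule natfilt_sub) (rule Xmeas)

lemma natfilt_subalg: "subalgebra M (natfilt M X k)"
  unfolding subalgebra_def using natfilt_sub_M by simp

lemma id_natfilt[measurable]: "(\<lambda>\<omega>. \<omega>) \<in> M \<rightarrow>\<^sub>M natfilt M X k"
  by (rule measurableI) (use natfilt_sub_M[of k] in \<open>auto intro: sets.Int sets.top\<close>)

lemma natfilt_to_M: "f \<in> natfilt M X k \<rightarrow>\<^sub>M N \<Longrightarrow> f \<in> M \<rightarrow>\<^sub>M N"
  using measurable_from_subalg[OF natfilt_subalg] by blast

definition gk :: "nat \<Rightarrow> 'a \<Rightarrow> real \<Rightarrow> real" where
  "gk k \<omega> z = 1 - fapp X \<epsilon> (enat k) \<omega> z"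

definition WW :: "enat \<Rightarrow> 'a \<Rightarrow> real" where
  "WW k \<omega> = 2 * (1 - vfrac X \<epsilon> k \<omega>)"

definition QQk :: "nat \<Rightarrow> 'a \<Rightarrow> ennreal" where
  "QQk k \<omega> = (\<integral>\<^sup>+x. indicator {-1..1} x * NI (\<lambda>z. gk k \<omega> z * gk k \<omega> (z - x)) \<partial>lborel)"

lemma gfun_gk: "gfun (gk k \<omega>) \<epsilon>"
proof unfold_locales
  show "gk k \<omega> \<in> borel_measurable borel" unfolding gk_def by measurable
qed (auto simp: gk_def fapp_near0 eps)

lemma WW_lint: "WW k \<omega> = (LINT z:{-1..1}|lborel. 1 - fapp X \<epsilon> k \<omega> z)"
  unfolding WW_def vfrac_def by (subst lint_compl) auto

lemma WW_NI: "ennreal (WW k \<omega>) = NI (\<lambda>z. 1 - fapp X \<epsilon> k \<omega> z)"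
  unfolding WW_lint by (rule lint_NI) auto

lemma WW_ge0: "0 \<le> WW k \<omega>" and WW_le2: "WW k \<omega> \<le> 2"
  unfolding WW_lint by (auto intro!: lint_ge0 lint_le2)

lemma WW_gk: "enn2real (NI (gk k \<omega>)) = WW (enat k) \<omega>"
  using WW_NI[of "enat k" \<omega>] WW_ge0[of "enat k" \<omega>] unfolding gk_def[abs_def]
  by (metis enn2real_ennreal)

lemma WW_Suc:
  "ennreal (WW (enat (Suc k)) \<omega>) = NI (\<lambda>z. gk k \<omega> z * gk k \<omega> (z - X (Suc k) \<omega>))"
  unfolding WW_NI gk_def fapp_Suc ..

lemma vfrac_meas[measurable]: "vfrac X \<epsilon> k \<in> borel_measurable (natfilt M X k)"
proof -
  have "vfrac X \<epsilon> k \<omega> = 1 - enn2real (NI (\<lambda>z. 1 - fapp X \<epsilon> k \<omega> z)) / 2" for \<omega>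
  proof -
    have "WW k \<omega> = enn2real (NI (\<lambda>z. 1 - fapp X \<epsilon> k \<omega> z))"
      using WW_NI[of k \<omega>] WW_ge0[of k \<omega>] by (metis enn2real_ennreal)
    then show ?thesis unfolding WW_def by simp
  qed
  then have eq: "vfrac X \<epsilon> k = (\<lambda>\<omega>. 1 - enn2real (NI (\<lambda>z. 1 - fapp X \<epsilon> k \<omega> z)) / 2)" by (rule ext)
  show ?thesis unfolding eq NI_def by measurable
qed

lemma vfrac_meas_M[measurable]: "vfrac X \<epsilon> k \<in> borel_measurable M"
  by (rule natfilt_to_M[OF vfrac_meas])

lemma QQk_meas[measurable]: "QQk k \<in> borel_measurable (natfilt M X (enat k))"
  unfolding QQk_def NI_def gk_def by measurable

end

context setting
begin

lemma indep_step:
  assumes A: "A \<in> sets (natfilt M X (enat k))" and B: "B \<in> sets (borel :: real measure)"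
  shows "prob (A \<inter> (X (Suc k) -` B \<inter> space M)) = prob A * prob (X (Suc k) -` B \<inter> space M)"
proof -
  define E where "E i = {X i -` A \<inter> space M | A. A \<in> sets (borel :: real measure)}" for i
  have ind: "indep_sets E {1..}"
    using indep unfolding indep_vars_def2 E_def by simp
  define I where "I b = (if b then {1..k} else {Suc k})" for b
  have "indep_sets E (\<Union>j\<in>UNIV. I j)"
    by (rule indep_sets_mono_index[OF _ ind]) (auto simp: I_def)
  moreover have "Int_stable (E i)" for i
  proof (rule Int_stableI)
    fix a b assume "a \<in> E i" "b \<in> E i"
    then obtain A B where AB: "a = X i -` A \<inter> space M" "A \<in> sets borel" "b = X i -` B \<inter> space M" "B \<in> sets borel"
      unfolding E_def by blast
    then have "a \<inter> b = X i -` (A \<inter> B) \<inter> space M" "A \<inter> B \<in> sets borel" by auto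
    then show "a \<inter> b \<in> E i" unfolding E_def by blast
  qed
  moreover have "disjoint_family_on I UNIV" unfolding disjoint_family_on_def I_def by auto
  ultimately have S: "indep_sets (\<lambda>j. sigma_sets (space M) (\<Union>i\<in>I j. E i)) UNIV"
    by (rule indep_sets_collect_sigma)
  then have S2: "indep_set (sigma_sets (space M) (\<Union>i\<in>I True. E i)) (sigma_sets (space M) (\<Union>i\<in>I False. E i))"
    unfolding indep_set_def by (rule indep_sets_cong[THEN iffD1, rotated -1]) (auto split: bool.split)
  have "(\<Union>i\<in>I True. E i) = {X i -` B \<inter> space M | i B. 1 \<le> i \<and> enat i \<le> enat k \<and> B \<in> sets borel}"
  proof (intro equalityI subsetI)
    fix a assume "a \<in> (\<Union>i\<in>I True. E i)"
    then obtain i A where iA: "i \<in> {1..k}" "a = X i -` A \<inter> space M" "A \<in> sets borel"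
      unfolding I_def E_def by auto
    show "a \<in> {X i -` B \<inter> space M | i B. 1 \<le> i \<and> enat i \<le> enat k \<and> B \<in> sets borel}"
      using iA by (intro CollectI exI[of _ i] exI[of _ A]) auto
  next
    fix a assume "a \<in> {X i -` B \<inter> space M | i B. 1 \<le> i \<and> enat i \<le> enat k \<and> B \<in> sets borel}"
    then obtain i A where iA: "1 \<le> i" "enat i \<le> enat k" "a = X i -` A \<inter> space M" "A \<in> sets borel"
      by auto
    then have "a \<in> E i" unfolding E_def by auto
    moreover have "i \<in> I True" using iA unfolding I_def by auto
    ultimately show "a \<in> (\<Union>i\<in>I True. E i)" by auto
  qed
  then have a: "A \<in> sigma_sets (space M) (\<Union>i\<in>I True. E i)"
    using A unfolding sets_natfilt by simp
  have b: "X (Suc k) -` B \<inter> space M \<in> sigma_sets (space M) (\<Union>i\<in>I False. E i)"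
    unfolding I_def E_def using B by (intro sigma_sets.Basic) auto
  show ?thesis by (rule indep_setD[OF S2 a b])
qed

lemma distr_pair:
  "distr M (natfilt M X (enat k)) (\<lambda>\<omega>. \<omega>) \<Otimes>\<^sub>M distr M borel (X (Suc k))
    = distr M (natfilt M X (enat k) \<Otimes>\<^sub>M borel) (\<lambda>\<omega>. (\<omega>, X (Suc k) \<omega>))"
proof -
  have Xm[measurable]: "X (Suc k) \<in> borel_measurable M" using Xmeas by simp
  interpret P1: prob_space "distr M (natfilt M X (enat k)) (\<lambda>\<omega>. \<omega>)"
    by (rule prob_space_distr) measurable
  interpret P2: prob_space "distr M borel (X (Suc k))"
    by (rule prob_space_distr) measurable
  show ?thesis
  proof (rule pair_measure_eqI)
    show "sigma_finite_measure (distr M (natfilt M X (enat k)) (\<lambda>\<omega>. \<omega>))" ..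
    show "sigma_finite_measure (distr M borel (X (Suc k)))" ..
    show "sets (distr M (natfilt M X (enat k)) (\<lambda>\<omega>. \<omega>) \<Otimes>\<^sub>M distr M borel (X (Suc k))) =
      sets (distr M (natfilt M X (enat k) \<Otimes>\<^sub>M borel) (\<lambda>\<omega>. (\<omega>, X (Suc k) \<omega>)))"
      unfolding sets_distr[of M "natfilt M X (enat k) \<Otimes>\<^sub>M borel"]
      by (rule sets_pair_measure_cong) (simp_all only: sets_distr)
  next
    fix A B
    assume A: "A \<in> sets (distr M (natfilt M X (enat k)) (\<lambda>\<omega>. \<omega>))"
      and B: "B \<in> sets (distr M borel (X (Suc k)))"
    then have A': "A \<in> sets (natfilt M X (enat k))" and B': "B \<in> sets borel" by auto
    have AM: "A \<in> sets M" using A' natfilt_sub_M by blast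
    have "emeasure (distr M (natfilt M X (enat k)) (\<lambda>\<omega>. \<omega>)) A = emeasure M A"
      using A' AM by (subst emeasure_distr) (auto simp: Int_absorb2 sets.sets_into_space)
    moreover have "emeasure (distr M borel (X (Suc k))) B = emeasure M (X (Suc k) -` B \<inter> space M)"
      using B' by (subst emeasure_distr) auto
    moreover have "emeasure (distr M (natfilt M X (enat k) \<Otimes>\<^sub>M borel) (\<lambda>\<omega>. (\<omega>, X (Suc k) \<omega>))) (A \<times> B)
        = emeasure M (A \<inter> (X (Suc k) -` B \<inter> space M))"
      using A' B' AM sets.sets_into_space[OF AM] by (subst emeasure_distr) (auto intro!: arg_cong[where f="emeasure M"])
    moreover have "prob (A \<inter> (X (Suc k) -` B \<inter> space M)) = prob A * prob (X (Suc k) -` B \<inter> space M)"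
      by (rule indep_step[OF A' B'])
    ultimately show "emeasure (distr M (natfilt M X (enat k)) (\<lambda>\<omega>. \<omega>)) A * emeasure (distr M borel (X (Suc k))) B =
       emeasure (distr M (natfilt M X (enat k) \<Otimes>\<^sub>M borel) (\<lambda>\<omega>. (\<omega>, X (Suc k) \<omega>))) (A \<times> B)"
      by (simp add: emeasure_eq_measure ennreal_mult)
  qed
qed

lemma indep_integral:
  assumes G[measurable]: "G \<in> borel_measurable (natfilt M X (enat k) \<Otimes>\<^sub>M borel)"
  shows "(\<integral>\<^sup>+\<omega>. G (\<omega>, X (Suc k) \<omega>) \<partial>M) = (\<integral>\<^sup>+\<omega>. (\<integral>\<^sup>+x. G (\<omega>, x) \<partial>distr M borel (X (Suc k))) \<partial>M)"
proof -
  have Xm[measurable]: "X (Suc k) \<in> borel_measurable M" using Xmeas by simp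
  interpret P2: prob_space "distr M borel (X (Suc k))"
    by (rule prob_space_distr) measurable
  have "(\<integral>\<^sup>+\<omega>. G (\<omega>, X (Suc k) \<omega>) \<partial>M) = (\<integral>\<^sup>+p. G p \<partial>distr M (natfilt M X (enat k) \<Otimes>\<^sub>M borel) (\<lambda>\<omega>. (\<omega>, X (Suc k) \<omega>)))"
    by (rule nn_integral_distr[symmetric]) measurable
  also have "\<dots> = (\<integral>\<^sup>+p. G p \<partial>(distr M (natfilt M X (enat k)) (\<lambda>\<omega>. \<omega>) \<Otimes>\<^sub>M distr M borel (X (Suc k))))"
    by (simp add: distr_pair)
  also have "\<dots> = (\<integral>\<^sup>+\<omega>. (\<integral>\<^sup>+x. G (\<omega>, x) \<partial>distr M borel (X (Suc k))) \<partial>distr M (natfilt M X (enat k)) (\<lambda>\<omega>. \<omega>))"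
    by (rule P2.nn_integral_fst[symmetric]) measurable
  also have "\<dots> = (\<integral>\<^sup>+\<omega>. (\<integral>\<^sup>+x. G (\<omega>, x) \<partial>distr M borel (X (Suc k))) \<partial>M)"
  proof (rule nn_integral_distr)
    show "(\<lambda>\<omega>. \<omega>) \<in> M \<rightarrow>\<^sub>M natfilt M X (enat k)" by measurable
    have "(\<lambda>\<omega>. \<integral>\<^sup>+x. G (\<omega>, x) \<partial>distr M borel (X (Suc k))) \<in> borel_measurable (natfilt M X (enat k))"
      by (rule P2.borel_measurable_nn_integral_fst) measurable
    then show "(\<lambda>\<omega>. \<integral>\<^sup>+x. G (\<omega>, x) \<partial>distr M borel (X (Suc k))) \<in> borel_measurable (distr M (natfilt M X (enat k)) (\<lambda>\<omega>. \<omega>))"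
      by simp
  qed
  finally show ?thesis .
qed

end

context setting
begin

lemma distr_X_unif: "distr M borel (X (Suc k)) = uniform_measure lborel {-1..1}"
proof -
  have "distr M borel (X (Suc k)) = distr M lborel (X (Suc k))" by (rule distr_cong) auto
  then show ?thesis using Xdistr[of "Suc k"] by simp
qed

lemma step:
  assumes A[measurable]: "A \<in> sets (natfilt M X (enat k))"
  shows "(\<integral>\<^sup>+\<omega>. indicator A \<omega> * ennreal (WW (enat (Suc k)) \<omega>) \<partial>M) = (\<integral>\<^sup>+\<omega>. indicator A \<omega> * (QQk k \<omega> / 2) \<partial>M)"
proof -
  define G where "G p = indicator A (fst p) * NI (\<lambda>z. gk k (fst p) z * gk k (fst p) (z - snd p))" for p
  have Gm[measurable]: "G \<in> borel_measurable (natfilt M X (enat k) \<Otimes>\<^sub>M borel)"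
    unfolding G_def NI_def gk_def by measurable
  have "(\<integral>\<^sup>+\<omega>. indicator A \<omega> * ennreal (WW (enat (Suc k)) \<omega>) \<partial>M) = (\<integral>\<^sup>+\<omega>. G (\<omega>, X (Suc k) \<omega>) \<partial>M)"
    unfolding G_def WW_Suc by simp
  also have "\<dots> = (\<integral>\<^sup>+\<omega>. (\<integral>\<^sup>+x. G (\<omega>, x) \<partial>distr M borel (X (Suc k))) \<partial>M)"
    by (rule indep_integral) (rule Gm)
  also have "\<dots> = (\<integral>\<^sup>+\<omega>. indicator A \<omega> * (QQk k \<omega> / 2) \<partial>M)"
  proof (rule nn_integral_cong)
    fix \<omega>
    have m: "(\<lambda>x. G (\<omega>, x)) \<in> borel_measurable lborel"
      unfolding G_def NI_def gk_def fst_conv snd_conv by measurable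
    have m2[measurable]: "(\<lambda>x. NI (\<lambda>z. gk k \<omega> z * gk k \<omega> (z - x))) \<in> borel_measurable borel"
      unfolding NI_def gk_def by measurable
    have "(\<integral>\<^sup>+x. G (\<omega>, x) * indicator {-1..1} x \<partial>lborel)
       = (\<integral>\<^sup>+x. indicator A \<omega> * (indicator {-1..1} x * NI (\<lambda>z. gk k \<omega> z * gk k \<omega> (z - x))) \<partial>lborel)"
      by (rule nn_integral_cong) (simp add: G_def mult_ac)
    also have "\<dots> = indicator A \<omega> * QQk k \<omega>"
      unfolding QQk_def by (rule nn_integral_cmult) measurable
    finally have eq2: "(\<integral>\<^sup>+x. G (\<omega>, x) * indicator {-1..1} x \<partial>lborel) = indicator A \<omega> * QQk k \<omega>" .
    have "(\<integral>\<^sup>+x. G (\<omega>, x) \<partial>distr M borel (X (Suc k))) = (\<integral>\<^sup>+x. G (\<omega>, x) * indicator {-1..1} x \<partial>lborel) / emeasure lborel {-1..1::real}"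
      unfolding distr_X_unif by (rule nn_integral_uniform_measure[OF m]) simp
    also have "\<dots> = indicator A \<omega> * QQk k \<omega> / 2" unfolding eq2 by simp
    finally show "(\<integral>\<^sup>+x. G (\<omega>, x) \<partial>distr M borel (X (Suc k))) = indicator A \<omega> * (QQk k \<omega> / 2)"
      by (simp add: ennreal_times_divide)
  qed
  finally show ?thesis .
qed

lemma QQk_bound1: "QQk k \<omega> \<le> ennreal (WW (enat k) \<omega> * (2 - min \<epsilon> 1))"
  using gfun_QQ_bound1[OF gfun_gk[of k \<omega>]] unfolding WW_gk QQk_def .

lemma QQk_bound2: "WW (enat k) \<omega> \<le> 1 \<Longrightarrow> QQk k \<omega> \<le> ennreal (3/2 * WW (enat k) \<omega> + (WW (enat k) \<omega>)^2 / 4)"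
  using gfun_QQ_bound2[OF gfun_gk[of k \<omega>]] unfolding WW_gk QQk_def .

definition \<rho> :: real where "\<rho> = 1 - min \<epsilon> 1 / 2"

lemma rho: "0 \<le> \<rho>" "\<rho> < 1"
  using eps unfolding \<rho>_def by auto

lemma decay: "(\<integral>\<^sup>+\<omega>. ennreal (WW (enat k) \<omega>) \<partial>M) \<le> ennreal (2 * \<rho> ^ k)"
proof (induction k)
  case 0
  have "(\<integral>\<^sup>+\<omega>. ennreal (WW (enat 0) \<omega>) \<partial>M) \<le> (\<integral>\<^sup>+\<omega>. ennreal 2 \<partial>M)"
    by (rule nn_integral_mono) (use ennreal_leI[OF WW_le2] in simp)
  also have "\<dots> = ennreal 2" by (simp add: emeasure_space_1)
  finally show ?case by simp
next
  case (Suc k)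
  have "(\<integral>\<^sup>+\<omega>. ennreal (WW (enat (Suc k)) \<omega>) \<partial>M) = (\<integral>\<^sup>+\<omega>. indicator (space M) \<omega> * ennreal (WW (enat (Suc k)) \<omega>) \<partial>M)"
    by (rule nn_integral_cong) simp
  also have "\<dots> = (\<integral>\<^sup>+\<omega>. indicator (space M) \<omega> * (QQk k \<omega> / 2) \<partial>M)"
    by (rule step) (metis natfilt_space sets.top)
  also have "\<dots> \<le> (\<integral>\<^sup>+\<omega>. ennreal \<rho> * ennreal (WW (enat k) \<omega>) \<partial>M)"
  proof (rule nn_integral_mono)
    fix \<omega> assume "\<omega> \<in> space M"
    have "QQk k \<omega> / 2 \<le> ennreal (WW (enat k) \<omega> * (2 - min \<epsilon> 1)) / 2"
      by (rule divide_right_mono_ennreal) (rule QQk_bound1)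
    also have "\<dots> = ennreal (WW (enat k) \<omega> * (2 - min \<epsilon> 1) / 2)"
      using WW_ge0[of "enat k" \<omega>] by (intro ennreal_divide_numeral) auto
    also have "\<dots> = ennreal \<rho> * ennreal (WW (enat k) \<omega>)"
      using WW_ge0[of "enat k" \<omega>] rho by (simp add: \<rho>_def ennreal_mult[symmetric] field_simps)
    finally show "indicator (space M) \<omega> * (QQk k \<omega> / 2) \<le> ennreal \<rho> * ennreal (WW (enat k) \<omega>)"
      using \<open>\<omega> \<in> space M\<close> by simp
  qed
  also have "\<dots> = ennreal \<rho> * (\<integral>\<^sup>+\<omega>. ennreal (WW (enat k) \<omega>) \<partial>M)"
  proof (rule nn_integral_cmult)
    show "(\<lambda>\<omega>. ennreal (WW (enat k) \<omega>)) \<in> borel_measurable M"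
      unfolding WW_def by measurable
  qed
  also have "\<dots> \<le> ennreal \<rho> * ennreal (2 * \<rho> ^ k)"
    by (rule mult_left_mono[OF Suc.IH]) simp
  also have "\<dots> = ennreal (2 * \<rho> ^ Suc k)"
    using rho by (simp add: ennreal_mult[symmetric] algebra_simps)
  finally show ?case .
qed

end

context setting
begin

lemma WW_mono: "k \<le> l \<Longrightarrow> WW l \<omega> \<le> WW k \<omega>"
proof -
  assume kl: "k \<le> l"
  have "NI (\<lambda>z. 1 - fapp X \<epsilon> l \<omega> z) \<le> NI (\<lambda>z. 1 - fapp X \<epsilon> k \<omega> z)"
    unfolding NI_def by (rule nn_integral_mono) (auto intro!: mult_left_mono ennreal_leI fapp_mono[OF kl])
  then have "ennreal (WW l \<omega>) \<le> ennreal (WW k \<omega>)" unfolding WW_NI .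
  then show ?thesis using WW_ge0[of k \<omega>] by simp
qed

lemma vfrac_WW: "vfrac X \<epsilon> k \<omega> = 1 - WW k \<omega> / 2"
  unfolding WW_def by (simp add: field_simps)

abbreviation "\<tau> \<equiv> tau1 X \<epsilon>"

lemma tau_le_iff: "\<tau> \<omega> \<le> enat m \<longleftrightarrow> (\<exists>j\<le>m. vfrac X \<epsilon> (enat j) \<omega> > 1/2)"
proof
  assume "\<tau> \<omega> \<le> enat m"
  then have ex: "\<exists>t. vfrac X \<epsilon> (enat t) \<omega> > 1/2" and le: "(LEAST t. vfrac X \<epsilon> (enat t) \<omega> > 1/2) \<le> m"
    unfolding tau1_def by (auto split: if_splits)
  show "\<exists>j\<le>m. vfrac X \<epsilon> (enat j) \<omega> > 1/2"
    using LeastI_ex[OF ex] le by blast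
next
  assume "\<exists>j\<le>m. vfrac X \<epsilon> (enat j) \<omega> > 1/2"
  then obtain j where j: "j \<le> m" "vfrac X \<epsilon> (enat j) \<omega> > 1/2" by blast
  then have "(LEAST t. vfrac X \<epsilon> (enat t) \<omega> > 1/2) \<le> j" by (intro Least_le)
  then show "\<tau> \<omega> \<le> enat m" using j unfolding tau1_def by auto
qed

lemma tau_enat: "\<tau> \<omega> = enat n \<Longrightarrow> vfrac X \<epsilon> (enat n) \<omega> > 1/2"
  unfolding tau1_def by (auto split: if_splits intro: LeastI_ex)

lemma tau_inf: "\<tau> \<omega> = \<infinity> \<longleftrightarrow> (\<forall>j. vfrac X \<epsilon> (enat j) \<omega> \<le> 1/2)"
proof -
  have "\<tau> \<omega> = \<infinity> \<longleftrightarrow> \<not> (\<exists>j. vfrac X \<epsilon> (enat j) \<omega> > 1/2)" unfolding tau1_def by simp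
  also have "\<dots> \<longleftrightarrow> (\<forall>j. vfrac X \<epsilon> (enat j) \<omega> \<le> 1/2)" by (simp add: not_less)
  finally show ?thesis .
qed

lemma natfilt_meas_mono:
  "f \<in> natfilt M X a \<rightarrow>\<^sub>M N \<Longrightarrow> a \<le> b \<Longrightarrow> f \<in> natfilt M X b \<rightarrow>\<^sub>M N"
  by (rule measurable_from_subalg[where F="natfilt M X a"]) (auto simp: subalgebra_def natfilt_mono)

lemma filt: "filtration (space M) (natfilt M X)"
  by unfold_locales (auto simp: natfilt_mono)

definition T :: "nat \<Rightarrow> 'a \<Rightarrow> enat" where "T t \<omega> = \<tau> \<omega> + enat t"

lemma T_le_iff: "T t \<omega> \<le> enat m \<longleftrightarrow> t \<le> m \<and> (\<exists>j\<le>m - t. vfrac X \<epsilon> (enat j) \<omega> > 1/2)"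
proof (cases "\<tau> \<omega>")
  case (enat n)
  then have "T t \<omega> \<le> enat m \<longleftrightarrow> t \<le> m \<and> \<tau> \<omega> \<le> enat (m - t)" unfolding T_def by auto
  then show ?thesis unfolding tau_le_iff by simp
next
  case infinity
  then show ?thesis unfolding T_def using tau_le_iff[of \<omega> "m - t"] by auto
qed

lemma stopping_T: "stopping_time (natfilt M X) (T t)"
proof (rule stopping_timeI)
  fix s :: enat
  show "Measurable.pred (natfilt M X s) (\<lambda>\<omega>. T t \<omega> \<le> s)"
  proof (cases s)
    case (enat m)
    have P: "Measurable.pred (natfilt M X (enat m)) (\<lambda>\<omega>. \<exists>j\<in>{..m - t}. vfrac X \<epsilon> (enat j) \<omega> > 1/2)"
    proof (rule pred_intros_countable_bounded(4))
      fix j assume "j \<in> {..m - t}"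
      then have "vfrac X \<epsilon> (enat j) \<in> borel_measurable (natfilt M X (enat m))"
        by (intro natfilt_meas_mono[OF vfrac_meas]) auto
      then show "Measurable.pred (natfilt M X (enat m)) (\<lambda>\<omega>. vfrac X \<epsilon> (enat j) \<omega> > 1/2)"
        by measurable
    qed
    have "Measurable.pred (natfilt M X (enat m)) (\<lambda>\<omega>. t \<le> m \<and> (\<exists>j\<in>{..m - t}. vfrac X \<epsilon> (enat j) \<omega> > 1/2))"
    proof (cases "t \<le> m")
      case True
      have eq: "(\<lambda>\<omega>. t \<le> m \<and> (\<exists>j\<in>{..m - t}. vfrac X \<epsilon> (enat j) \<omega> > 1/2)) = (\<lambda>\<omega>. \<exists>j\<in>{..m - t}. vfrac X \<epsilon> (enat j) \<omega> > 1/2)"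
        using True by (rule_tac ext) blast
      show ?thesis unfolding eq by (rule P)
    next
      case False
      have eq: "(\<lambda>\<omega>. t \<le> m \<and> (\<exists>j\<in>{..m - t}. vfrac X \<epsilon> (enat j) \<omega> > 1/2)) = (\<lambda>\<omega>. False)"
        using False by (rule_tac ext) blast
      show ?thesis unfolding eq pred_def by simp
    qed
    moreover have "(\<lambda>\<omega>. T t \<omega> \<le> s) = (\<lambda>\<omega>. t \<le> m \<and> (\<exists>j\<in>{..m - t}. vfrac X \<epsilon> (enat j) \<omega> > 1/2))"
      unfolding enat T_le_iff by (rule ext) (auto simp: atMost_iff)
    ultimately show ?thesis unfolding enat by (simp only:)
  next
    case infinity
    then show ?thesis by simp
  qed
qed

lemma T_eq_pred: "Measurable.pred (natfilt M X (enat n)) (\<lambda>\<omega>. T t \<omega> = enat n)"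
proof -
  have a: "Measurable.pred (natfilt M X (enat n)) (\<lambda>\<omega>. T t \<omega> \<le> enat n)"
    using stopping_T by (rule stopping_timeD)
  show ?thesis
  proof (cases n)
    case 0
    then show ?thesis using a by (simp add: zero_enat_def[symmetric])
  next
    case (Suc m)
    have "Measurable.pred (natfilt M X (enat m)) (\<lambda>\<omega>. T t \<omega> \<le> enat m)"
      using stopping_T by (rule stopping_timeD)
    then have b: "Measurable.pred (natfilt M X (enat n)) (\<lambda>\<omega>. T t \<omega> \<le> enat m)"
      by (rule natfilt_meas_mono) (simp add: Suc)
    have "T t \<omega> = enat n \<longleftrightarrow> T t \<omega> \<le> enat n \<and> \<not> T t \<omega> \<le> enat m" for \<omega>
      using Suc by (cases "T t \<omega>") auto
    then have "(\<lambda>\<omega>. T t \<omega> = enat n) = (\<lambda>\<omega>. T t \<omega> \<le> enat n \<and> \<not> T t \<omega> \<le> enat m)"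
      by (simp add: fun_eq_iff)
    then show ?thesis using a b by simp
  qed
qed

lemma T_enat_WW: "T t \<omega> = enat n \<Longrightarrow> WW (enat n) \<omega> < 1"
proof -
  assume "T t \<omega> = enat n"
  then obtain m where m: "\<tau> \<omega> = enat m" "n = m + t" unfolding T_def by (cases "\<tau> \<omega>") auto
  have "vfrac X \<epsilon> (enat m) \<omega> > 1/2" using m(1) by (rule tau_enat)
  then have "WW (enat m) \<omega> < 1" unfolding vfrac_WW by simp
  moreover have "WW (enat n) \<omega> \<le> WW (enat m) \<omega>" using m by (intro WW_mono) simp
  ultimately show ?thesis by simp
qed

end

context setting
begin

lemma tau_fin_AE: "AE \<omega> in M. \<tau> \<omega> \<noteq> \<infinity>"
proof -
  define Z where "Z = {\<omega> \<in> space M. \<forall>j. vfrac X \<epsilon> (enat j) \<omega> \<le> 1/2}"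
  have Zs: "Z \<in> sets M" unfolding Z_def by measurable
  have bound: "measure M Z \<le> 2 * \<rho> ^ k" for k
  proof -
    have "emeasure M Z = (\<integral>\<^sup>+\<omega>. indicator Z \<omega> \<partial>M)" using Zs by simp
    also have "\<dots> \<le> (\<integral>\<^sup>+\<omega>. ennreal (WW (enat k) \<omega>) \<partial>M)"
    proof (rule nn_integral_mono)
      fix \<omega> assume "\<omega> \<in> space M"
      show "indicator Z \<omega> \<le> ennreal (WW (enat k) \<omega>)"
      proof (cases "\<omega> \<in> Z")
        case True
        then have "vfrac X \<epsilon> (enat k) \<omega> \<le> 1/2" unfolding Z_def by auto
        then have "1 \<le> WW (enat k) \<omega>" unfolding WW_def by simp
        then show ?thesis using True by (simp add: ennreal_leI[of 1, simplified])
      qed simp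
    qed
    also have "\<dots> \<le> ennreal (2 * \<rho> ^ k)" by (rule decay)
    finally show ?thesis using rho by (simp add: emeasure_eq_measure)
  qed
  have lim: "(\<lambda>k. 2 * \<rho> ^ k) \<longlonglongrightarrow> 0"
    using rho by (intro tendsto_mult_right_zero LIMSEQ_power_zero) auto
  have "measure M Z \<le> 0"
    by (rule LIMSEQ_le_const[OF lim]) (use bound in auto)
  then have "emeasure M Z = 0" using measure_nonneg[of M Z] by (simp add: emeasure_eq_measure)
  then have "Z \<in> null_sets M" using Zs by auto
  then show ?thesis
    by (rule AE_I') (auto simp: Z_def tau_inf)
qed

lemma T_pred_M: "Measurable.pred M (\<lambda>\<omega>. T s \<omega> = a)"
proof (cases a)
  case (enat n)
  then show ?thesis using natfilt_to_M[OF T_eq_pred[of s n]] by simp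
next
  case infinity
  have "(\<lambda>\<omega>. T s \<omega> = \<infinity>) = (\<lambda>\<omega>. \<forall>n. \<not> T s \<omega> = enat n)"
    by (rule ext) (metis enat.exhaust infinity_ne_i1 not_infinity_eq)
  moreover have [measurable]: "Measurable.pred M (\<lambda>\<omega>. T s \<omega> = enat n)" for n
    using natfilt_to_M[OF T_eq_pred[of s n]] .
  moreover have "Measurable.pred M (\<lambda>\<omega>. \<forall>n. \<not> T s \<omega> = enat n)" by measurable
  ultimately show ?thesis unfolding infinity by simp
qed

lemma T_count[measurable]: "T s \<in> M \<rightarrow>\<^sub>M count_space UNIV"
  unfolding measurable_count_space_eq2_countable
  using T_pred_M[of s] by (auto simp: pred_def vimage_def Int_def conj_commute)

lemma vfrac_le1: "vfrac X \<epsilon> k \<omega> \<le> 1" and vfrac_ge0: "0 \<le> vfrac X \<epsilon> k \<omega>"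
  using WW_ge0[of k \<omega>] WW_le2[of k \<omega>] unfolding vfrac_WW by auto

lemma wfrac_eq: "wfrac X \<epsilon> s \<omega> = 1 - vfrac X \<epsilon> (T s \<omega>) \<omega>"
  unfolding wfrac_def T_def ..

lemma wfrac_meas[measurable]: "wfrac X \<epsilon> s \<in> borel_measurable M"
proof -
  have "(\<lambda>\<omega>. 1 - vfrac X \<epsilon> (T s \<omega>) \<omega>) \<in> borel_measurable M"
    by (rule measurable_compose_countable'[where I=UNIV and f="\<lambda>k \<omega>. 1 - vfrac X \<epsilon> k \<omega>"]) auto
  then show ?thesis unfolding wfrac_eq[abs_def] .
qed

end

context setting
begin

abbreviation PS :: "nat \<Rightarrow> 'a measure" where
  "PS s \<equiv> filtration.pre_sigma (space M) (natfilt M X) (T s)"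

lemma sets_PS: "sets (PS s) = {A. \<forall>r. {\<omega>\<in>A. T s \<omega> \<le> r} \<in> sets (natfilt M X r)}"
  by (rule filtration.sets_pre_sigma[OF filt stopping_T])

lemma PS_sub: "A \<in> sets (PS s) \<Longrightarrow> A \<in> sets M"
proof -
  assume "A \<in> sets (PS s)"
  then have "{\<omega>\<in>A. T s \<omega> \<le> \<infinity>} \<in> sets (natfilt M X \<infinity>)" unfolding sets_PS by blast
  then show "A \<in> sets M" using natfilt_sub_M by auto
qed

lemma PS_subalg: "subalgebra M (PS s)"
  unfolding subalgebra_def
  using filtration.space_pre_sigma[OF filt, of "T s"] PS_sub by auto

lemma PS_B: "A \<in> sets (PS s) \<Longrightarrow> {\<omega>\<in>A. T s \<omega> = enat n} \<in> sets (natfilt M X (enat n))"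
proof -
  assume A: "A \<in> sets (PS s)"
  have 1: "{\<omega>\<in>A. T s \<omega> \<le> enat n} \<in> sets (natfilt M X (enat n))" using A unfolding sets_PS by blast
  have 2: "{\<omega>\<in>space M. T s \<omega> = enat n} \<in> sets (natfilt M X (enat n))"
    using T_eq_pred[of s n] unfolding pred_def by simp
  have "A \<subseteq> space M" using PS_sub[OF A] sets.sets_into_space by blast
  then have "{\<omega>\<in>A. T s \<omega> = enat n} = {\<omega>\<in>A. T s \<omega> \<le> enat n} \<inter> {\<omega>\<in>space M. T s \<omega> = enat n}" by auto
  then show ?thesis using 1 2 by simp
qed

definition gg :: "nat \<Rightarrow> 'a \<Rightarrow> real" where
  "gg s \<omega> = (case T s \<omega> of enat n \<Rightarrow> enn2real (QQk n \<omega>) / 4 | \<infinity> \<Rightarrow> 0)"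

lemma gg_meas_PS: "gg s \<in> borel_measurable (PS s)"
proof (rule borel_measurableI_le)
  fix a :: real
  have "Measurable.pred (PS s) (\<lambda>\<omega>. gg s \<omega> \<le> a)"
  proof (rule filtration.pred_pre_sigmaI[OF filt stopping_T])
    fix r :: enat
    show "Measurable.pred (natfilt M X r) (\<lambda>\<omega>. gg s \<omega> \<le> a \<and> T s \<omega> \<le> r)"
    proof (cases r)
      case (enat m)
      have eq: "(\<lambda>\<omega>. gg s \<omega> \<le> a \<and> T s \<omega> \<le> r) = (\<lambda>\<omega>. \<exists>n\<in>{..m}. T s \<omega> = enat n \<and> enn2real (QQk n \<omega>) / 4 \<le> a)"
      proof (rule ext)
        fix \<omega> show "(gg s \<omega> \<le> a \<and> T s \<omega> \<le> r) = (\<exists>n\<in>{..m}. T s \<omega> = enat n \<and> enn2real (QQk n \<omega>) / 4 \<le> a)"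
          unfolding enat gg_def by (cases "T s \<omega>") auto
      qed
      show ?thesis unfolding eq
      proof (rule pred_intros_countable_bounded(4))
        fix n assume "n \<in> {..m}"
        then have [measurable]: "Measurable.pred (natfilt M X (enat m)) (\<lambda>\<omega>. T s \<omega> = enat n)"
          and [measurable]: "QQk n \<in> borel_measurable (natfilt M X (enat m))"
          by (auto intro!: natfilt_meas_mono[OF T_eq_pred] natfilt_meas_mono[OF QQk_meas])
        show "Measurable.pred (natfilt M X r) (\<lambda>\<omega>. T s \<omega> = enat n \<and> enn2real (QQk n \<omega>) / 4 \<le> a)"
          unfolding enat by measurable
      qed
    next
      case infinity
      have eq: "(\<lambda>\<omega>. gg s \<omega> \<le> a \<and> T s \<omega> \<le> r) = (\<lambda>\<omega>. (\<exists>n. T s \<omega> = enat n \<and> enn2real (QQk n \<omega>) / 4 \<le> a) \<or> ((\<forall>n. \<not> T s \<omega> = enat n) \<and> 0 \<le> a))"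
      proof (rule ext)
        fix \<omega> show "(gg s \<omega> \<le> a \<and> T s \<omega> \<le> r) = ((\<exists>n. T s \<omega> = enat n \<and> enn2real (QQk n \<omega>) / 4 \<le> a) \<or> ((\<forall>n. \<not> T s \<omega> = enat n) \<and> 0 \<le> a))"
          unfolding infinity gg_def by (cases "T s \<omega>") auto
      qed
      have [measurable]: "Measurable.pred (natfilt M X \<infinity>) (\<lambda>\<omega>. T s \<omega> = enat n)"
        and [measurable]: "QQk n \<in> borel_measurable (natfilt M X \<infinity>)" for n
        by (auto intro!: natfilt_meas_mono[OF T_eq_pred] natfilt_meas_mono[OF QQk_meas])
      show ?thesis unfolding eq unfolding infinity by measurable
    qed
  qed
  then show "{\<omega> \<in> space (PS s). gg s \<omega> \<le> a} \<in> sets (PS s)" unfolding pred_def .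
qed

lemma gg_meas[measurable]: "gg s \<in> borel_measurable M"
  by (rule measurable_from_subalg[OF PS_subalg gg_meas_PS])

lemma QQk_fin: "QQk n \<omega> \<le> ennreal 4"
proof -
  have "QQk n \<omega> \<le> ennreal (WW (enat n) \<omega> * (2 - min \<epsilon> 1))" by (rule QQk_bound1)
  also have "\<dots> \<le> ennreal 4"
  proof (rule ennreal_leI)
    have "WW (enat n) \<omega> * (2 - min \<epsilon> 1) \<le> 2 * 2"
      using WW_ge0[of "enat n" \<omega>] WW_le2[of "enat n" \<omega>] eps by (intro mult_mono) auto
    then show "WW (enat n) \<omega> * (2 - min \<epsilon> 1) \<le> 4" by simp
  qed
  finally show ?thesis .
qed

lemma gg_bounds: "0 \<le> gg s \<omega>" "gg s \<omega> \<le> 1"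
proof -
  show "0 \<le> gg s \<omega>" unfolding gg_def by (cases "T s \<omega>") (auto simp: enn2real_nonneg)
  have "enn2real (QQk n \<omega>) \<le> 4" for n by (rule enn2real_leI) (use QQk_fin[of n \<omega>] in auto)
  then show "gg s \<omega> \<le> 1" unfolding gg_def by (cases "T s \<omega>") auto
qed

lemma gg_target: "gg s \<omega> \<le> wfrac X \<epsilon> s \<omega> * (1 - 1/4 * (1 - wfrac X \<epsilon> s \<omega>))"
proof (cases "T s \<omega>")
  case (enat n)
  define W where "W = WW (enat n) \<omega>"
  have w: "wfrac X \<epsilon> s \<omega> = W / 2" unfolding wfrac_eq enat W_def vfrac_WW by simp
  have W1: "W \<le> 1" using T_enat_WW[OF enat] unfolding W_def by simp
  have W0: "0 \<le> W" unfolding W_def by (rule WW_ge0)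
  have "QQk n \<omega> \<le> ennreal (3/2 * W + W^2 / 4)" unfolding W_def by (rule QQk_bound2) (use W1 W_def in simp)
  then have "enn2real (QQk n \<omega>) \<le> 3/2 * W + W^2 / 4" using W0 by (intro enn2real_leI) auto
  then have "gg s \<omega> \<le> (3/2 * W + W^2 / 4) / 4" unfolding gg_def enat by simp
  also have "\<dots> = W / 2 * (1 - 1/4 * (1 - W / 2))" by (simp add: field_simps power2_eq_square)
  finally show ?thesis unfolding w .
next
  case infinity
  have "0 \<le> wfrac X \<epsilon> s \<omega>" "wfrac X \<epsilon> s \<omega> \<le> 1"
    unfolding wfrac_eq using vfrac_le1 vfrac_ge0 by auto
  then have "0 \<le> wfrac X \<epsilon> s \<omega> * (1 - 1/4 * (1 - wfrac X \<epsilon> s \<omega>))" by (intro mult_nonneg_nonneg) auto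
  then show ?thesis unfolding gg_def infinity by simp
qed

end

context setting
begin

lemma W_Suc: "T s \<omega> = enat n \<Longrightarrow> 2 * wfrac X \<epsilon> (Suc s) \<omega> = WW (enat (Suc n)) \<omega>"
proof -
  assume "T s \<omega> = enat n"
  then have "T (Suc s) \<omega> = enat (Suc n)" unfolding T_def by (cases "\<tau> \<omega>") auto
  then show ?thesis unfolding wfrac_eq WW_def by simp
qed

lemma gg_enat: "T s \<omega> = enat n \<Longrightarrow> ennreal (2 * gg s \<omega>) = QQk n \<omega> / 2"
proof -
  assume "T s \<omega> = enat n"
  then have e: "2 * gg s \<omega> = enn2real (QQk n \<omega>) / 2" unfolding gg_def by simp
  have "ennreal (2 * gg s \<omega>) = ennreal (enn2real (QQk n \<omega>) / 2)" by (simp only: e)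
  also have "\<dots> = ennreal (enn2real (QQk n \<omega>)) / 2"
    by (rule ennreal_divide_numeral[symmetric]) (rule enn2real_nonneg)
  also have "ennreal (enn2real (QQk n \<omega>)) = QQk n \<omega>"
    using QQk_fin[of n \<omega>] by (intro ennreal_enn2real) (metis ennreal_less_top le_less_trans)
  finally show ?thesis .
qed

lemma sum_ind:
  fixes c :: ennreal
  assumes "\<tau> \<omega> \<noteq> \<infinity>"
  shows "indicator A \<omega> * c = (\<Sum>n. c * indicator {\<omega>\<in>A. T s \<omega> = enat n} \<omega>)"
proof -
  obtain i where i: "T s \<omega> = enat i" using assms(1) unfolding T_def by (cases "\<tau> \<omega>") auto
  have d: "disjoint_family (\<lambda>n. {\<omega>\<in>A. T s \<omega> = enat n})" unfolding disjoint_family_on_def by auto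
  show ?thesis
  proof (cases "\<omega> \<in> A")
    case True
    then have "\<omega> \<in> {\<omega>\<in>A. T s \<omega> = enat i}" using i by simp
    from suminf_cmult_indicator[OF d this, of "\<lambda>_. c"] True show ?thesis by simp
  next
    case False
    then show ?thesis by simp
  qed
qed

lemma main_nn:
  assumes A: "A \<in> sets (PS s)"
  shows "(\<integral>\<^sup>+\<omega>. indicator A \<omega> * ennreal (2 * wfrac X \<epsilon> (Suc s) \<omega>) \<partial>M)
       = (\<integral>\<^sup>+\<omega>. indicator A \<omega> * ennreal (2 * gg s \<omega>) \<partial>M)"
proof -
  define B where "B n = {\<omega>\<in>A. T s \<omega> = enat n}" for n
  have Bn[measurable]: "B n \<in> sets (natfilt M X (enat n))" for n unfolding B_def by (rule PS_B[OF A])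
  have BM[measurable]: "B n \<in> sets M" for n using Bn[of n] natfilt_sub_M by blast
  have key: "(\<integral>\<^sup>+\<omega>. ennreal (2 * wfrac X \<epsilon> (Suc s) \<omega>) * indicator (B n) \<omega> \<partial>M)
      = (\<integral>\<^sup>+\<omega>. ennreal (2 * gg s \<omega>) * indicator (B n) \<omega> \<partial>M)" for n
  proof -
    have "(\<integral>\<^sup>+\<omega>. ennreal (2 * wfrac X \<epsilon> (Suc s) \<omega>) * indicator (B n) \<omega> \<partial>M)
        = (\<integral>\<^sup>+\<omega>. indicator (B n) \<omega> * ennreal (WW (enat (Suc n)) \<omega>) \<partial>M)"
      by (rule nn_integral_cong) (auto simp: B_def W_Suc indicator_def)
    also have "\<dots> = (\<integral>\<^sup>+\<omega>. indicator (B n) \<omega> * (QQk n \<omega> / 2) \<partial>M)"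
      by (rule step[OF Bn])
    also have "\<dots> = (\<integral>\<^sup>+\<omega>. ennreal (2 * gg s \<omega>) * indicator (B n) \<omega> \<partial>M)"
      by (rule nn_integral_cong) (auto simp: B_def gg_enat indicator_def)
    finally show ?thesis .
  qed
  have ae: "AE \<omega> in M. indicator A \<omega> * c \<omega> = (\<Sum>n. c \<omega> * indicator (B n) \<omega>)" for c :: "'a \<Rightarrow> ennreal"
    using tau_fin_AE by eventually_elim (unfold B_def, rule sum_ind)
  have "(\<integral>\<^sup>+\<omega>. indicator A \<omega> * ennreal (2 * wfrac X \<epsilon> (Suc s) \<omega>) \<partial>M)
      = (\<integral>\<^sup>+\<omega>. (\<Sum>n. ennreal (2 * wfrac X \<epsilon> (Suc s) \<omega>) * indicator (B n) \<omega>) \<partial>M)"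
    by (rule nn_integral_cong_AE) (rule ae)
  also have "\<dots> = (\<Sum>n. \<integral>\<^sup>+\<omega>. ennreal (2 * wfrac X \<epsilon> (Suc s) \<omega>) * indicator (B n) \<omega> \<partial>M)"
    by (rule nn_integral_suminf) measurable
  also have "\<dots> = (\<Sum>n. \<integral>\<^sup>+\<omega>. ennreal (2 * gg s \<omega>) * indicator (B n) \<omega> \<partial>M)"
    using key by simp
  also have "\<dots> = (\<integral>\<^sup>+\<omega>. (\<Sum>n. ennreal (2 * gg s \<omega>) * indicator (B n) \<omega>) \<partial>M)"
    by (rule nn_integral_suminf[symmetric]) measurable
  also have "\<dots> = (\<integral>\<^sup>+\<omega>. indicator A \<omega> * ennreal (2 * gg s \<omega>) \<partial>M)"
    by (rule nn_integral_cong_AE[OF AE_symmetric[OF ae]])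
  finally show ?thesis .
qed

lemma set_int_nn:
  assumes [measurable]: "f \<in> borel_measurable M" "A \<in> sets M" and f0: "\<And>\<omega>. 0 \<le> f \<omega>"
  shows "(\<integral>\<omega>\<in>A. f \<omega> \<partial>M) = enn2real (\<integral>\<^sup>+\<omega>. indicator A \<omega> * ennreal (2 * f \<omega>) \<partial>M) / 2"
proof -
  have "(\<integral>\<omega>\<in>A. f \<omega> \<partial>M) = enn2real (\<integral>\<^sup>+\<omega>. ennreal (indicator A \<omega> *\<^sub>R f \<omega>) \<partial>M)"
    unfolding set_lebesgue_integral_def by (rule integral_eq_nn_integral) (auto simp: f0)
  also have "(\<integral>\<^sup>+\<omega>. indicator A \<omega> * ennreal (2 * f \<omega>) \<partial>M) = 2 * (\<integral>\<^sup>+\<omega>. ennreal (indicator A \<omega> *\<^sub>R f \<omega>) \<partial>M)"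
    by (subst nn_integral_cmult[symmetric]) (auto intro!: nn_integral_cong simp: indicator_def ennreal_mult f0)
  ultimately show ?thesis by (simp add: enn2real_mult)
qed

lemma main_eq:
  assumes A: "A \<in> sets (PS s)"
  shows "(\<integral>\<omega>\<in>A. wfrac X \<epsilon> (Suc s) \<omega> \<partial>M) = (\<integral>\<omega>\<in>A. gg s \<omega> \<partial>M)"
proof -
  have AM[measurable]: "A \<in> sets M" by (rule PS_sub[OF A])
  have w0: "0 \<le> wfrac X \<epsilon> (Suc s) \<omega>" for \<omega> unfolding wfrac_eq using vfrac_le1 by simp
  show ?thesis
    unfolding set_int_nn[OF wfrac_meas AM w0] set_int_nn[OF gg_meas AM gg_bounds(1)] main_nn[OF A] ..
qed

theorem main:
  "AE \<omega> in M. real_cond_exp M (PS s) (wfrac X \<epsilon> (Suc s)) \<omega>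
     \<le> wfrac X \<epsilon> s \<omega> * (1 - 1/4 * (1 - wfrac X \<epsilon> s \<omega>))"
proof -
  have "finite_measure_subalgebra M (PS s)"
    unfolding finite_measure_subalgebra_def finite_measure_subalgebra_axioms_def
    using PS_subalg finite_measure_axioms by blast
  then interpret S: sigma_finite_subalgebra M "PS s" by (rule finite_measure_subalgebra_is_sigma_finite)
  have int1: "integrable M (wfrac X \<epsilon> (Suc s))"
    by (rule integrable_const_bound[where B=1]) (auto simp: wfrac_eq vfrac_le1 vfrac_ge0)
  have int2: "integrable M (gg s)"
    by (rule integrable_const_bound[where B=1]) (auto simp: gg_bounds)
  have "AE \<omega> in M. real_cond_exp M (PS s) (wfrac X \<epsilon> (Suc s)) \<omega> = gg s \<omega>"
    by (rule S.real_cond_exp_charact[OF main_eq int1 int2 gg_meas_PS])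
  then show ?thesis
    by eventually_elim (use gg_target in auto)
qed

end

theorem corollary5:
  fixes M :: "'a measure" and X :: "nat \<Rightarrow> 'a \<Rightarrow> real" and \<epsilon> :: real and t :: nat
  assumes "prob_space M"
    and "\<And>i. 1 \<le> i \<Longrightarrow> X i \<in> borel_measurable M"
    and "prob_space.indep_vars M (\<lambda>_. borel) X {1..}"
    and "\<And>i. 1 \<le> i \<Longrightarrow> distr M lborel (X i) = uniform_measure lborel {-1..1}"
    and "\<epsilon> > 0"
  shows "AE \<omega> in M.
     real_cond_exp M
       (filtration.pre_sigma (space M) (natfilt M X) (\<lambda>\<omega>. tau1 X \<epsilon> \<omega> + enat t))
       (wfrac X \<epsilon> (Suc t)) \<omega>
     \<le> wfrac X \<epsilon> t \<omega> * (1 - (1/4) * (1 - wfrac X \<epsilon> t \<omega>))"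
proof -
  interpret S: setting M X \<epsilon>
    by (rule setting.intro) (use assms in auto)
  show ?thesis using S.main[of t] unfolding S.T_def[abs_def] by simp
qed

end
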